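(* Assume $[p,p']\cap\overline D=\emptyset$ (convexity of $D$ is not assumed). There exist positive constants $C,\mu,\tau_0$ such that for all $\tau\ge\tau_0$, $$\tau^{2+\mu}e^{\tau\min_{x\in\partial D}\phi(x;p,p')}e^{-\tau(\eta+\eta')}J(\tau;f,g)\ge C.$$
   Context: Let $D\subset\mathbb R^3$ be a nonempty bounded open set with $C^2$ boundary. $B,B'$ are open balls with centers $p,p'$ and radii $\eta,\eta'$, with $\overline B\cap\overline D=\overline{B'}\cap\overline D=\emptyset$; $f=\chi_B$, $g=\chi_{B'}$. $[p,p']$ is the closed segment between $p$ and $p'$. For $h\in L^2$ and $\tau>0$, $v_h(x)=\frac1{4\pi}\int\frac{e^{-\tau|x-y|}}{|x-y|}h(y)dy$. $J(\tau;f,g)=\int_D(\nabla v_f\cdot\nabla v_g+\tau^2v_fv_g)dx$. $\phi(x;y,y')=|y-x|+|x-y'|$. *)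

theory Defs
  imports "HOL-Analysis.Analysis"
begin

definition C2_on :: "(real^3 \<Rightarrow> real) \<Rightarrow> (real^3) set \<Rightarrow> bool" where
  "C2_on \<rho> U \<longleftrightarrow>
     (\<exists>D1 :: real^3 \<Rightarrow> ((real^3) \<Rightarrow>\<^sub>L real).
      \<exists>D2 :: real^3 \<Rightarrow> ((real^3) \<Rightarrow>\<^sub>L ((real^3) \<Rightarrow>\<^sub>L real)).
        (\<forall>x\<in>U. (\<rho> has_derivative blinfun_apply (D1 x)) (at x)) \<and>
        (\<forall>x\<in>U. (D1 has_derivative blinfun_apply (D2 x)) (at x)) \<and>
        continuous_on U D2)"

definition C2_boundary :: "(real^3) set \<Rightarrow> bool" where
  "C2_boundary D \<longleftrightarrow>
     (\<forall>z\<in>frontier D. \<exists>U \<rho>. open U \<and> z \<in> U \<and> C2_on \<rho> U \<and>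
        (\<forall>x\<in>U. frechet_derivative \<rho> (at x) \<noteq> (\<lambda>h. 0)) \<and>
        D \<inter> U = {x\<in>U. \<rho> x < 0})"

definition vpot :: "real \<Rightarrow> (real^3 \<Rightarrow> real) \<Rightarrow> real^3 \<Rightarrow> real" where
  "vpot \<tau> h x = 1 / (4 * pi) *
     integral UNIV (\<lambda>y. exp (- \<tau> * dist x y) / dist x y * h y)"

definition grad_dot :: "(real^3 \<Rightarrow> real) \<Rightarrow> (real^3 \<Rightarrow> real) \<Rightarrow> real^3 \<Rightarrow> real" where
  "grad_dot u w x = (\<Sum>i\<in>UNIV. frechet_derivative u (at x) (axis i 1) *
                                 frechet_derivative w (at x) (axis i 1))"

definition Jfun :: "(real^3) set \<Rightarrow> real \<Rightarrow> (real^3 \<Rightarrow> real) \<Rightarrow> (real^3 \<Rightarrow> real) \<Rightarrow> real" where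
  "Jfun D \<tau> f g = integral D (\<lambda>x. grad_dot (vpot \<tau> f) (vpot \<tau> g) x
                                    + \<tau>\<^sup>2 * vpot \<tau> f x * vpot \<tau> g x)"

definition phi :: "real^3 \<Rightarrow> real^3 \<Rightarrow> real^3 \<Rightarrow> real" where
  "phi x y y' = dist y x + dist x y'"

end

theory Submission
  imports Defs
begin

definition Kf :: "real \<Rightarrow> real^3 \<Rightarrow> real" where
  "Kf \<tau> z = exp (- \<tau> * norm z) / norm z"

definition gK :: "real \<Rightarrow> real^3 \<Rightarrow> real^3" where
  "gK \<tau> z = (- (\<tau> * norm z + 1) * exp (- \<tau> * norm z) / (norm z)^3) *\<^sub>R z"

lemma Kf_deriv:
  assumes "z \<noteq> 0"
  shows "(Kf \<tau> has_derivative (\<lambda>h. gK \<tau> z \<bullet> h)) (at z)"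
proof -
  have n: "norm z > 0" using assms by simp
  define k where "k r = exp (- \<tau> * r) / r" for r :: real
  define d where "d = (exp (- \<tau> * norm z) * (- \<tau>) * norm z - exp (- \<tau> * norm z)) / (norm z)^2"
  have dk: "(k has_real_derivative d) (at (norm z))"
    unfolding k_def d_def
    by (rule derivative_eq_intros refl | use n in \<open>simp add: power2_eq_square\<close>)+
  have hn: "(norm has_derivative (\<lambda>h. h \<bullet> sgn z)) (at z)"
    using has_derivative_norm[OF assms] .
  have "((k \<circ> norm) has_derivative ((\<lambda>x. d * x) \<circ> (\<lambda>h. h \<bullet> sgn z))) (at z)"
    by (rule diff_chain_at[OF hn]) (use dk in \<open>simp add: has_field_derivative_def\<close>)
  moreover have "(k \<circ> norm) = Kf \<tau>" by (auto simp: k_def Kf_def fun_eq_iff)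
  moreover have "((\<lambda>x. d * x) \<circ> (\<lambda>h. h \<bullet> sgn z)) = (\<lambda>h. gK \<tau> z \<bullet> h)"
    using n by (auto simp: gK_def d_def sgn_div_norm field_simps power3_eq_cube power2_eq_square inner_commute)
  ultimately show ?thesis by simp
qed

lemma absint_bounded:
  fixes f :: "real^3 \<Rightarrow> 'b::euclidean_space"
  assumes "continuous_on S f" "S \<in> lmeasurable" "\<And>x. x \<in> S \<Longrightarrow> norm (f x) \<le> M"
  shows "f absolutely_integrable_on S"
  by (rule measurable_bounded_by_integrable_imp_absolutely_integrable[where g="\<lambda>_. M"])
     (use assms in \<open>auto intro: continuous_imp_measurable_on_sets_lebesgue integrable_on_const\<close>)

lemma absint_cball_sub:
  fixes f :: "real^3 \<Rightarrow> 'b::euclidean_space"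
  assumes "continuous_on (cball p \<eta>) f"
  shows "f absolutely_integrable_on ball p \<eta>"
proof -
  obtain M where "\<forall>x\<in>cball p \<eta>. norm (f x) \<le> M"
    using compact_imp_bounded[OF compact_continuous_image[OF assms compact_cball]]
    by (auto simp: bounded_iff)
  then show ?thesis
    by (intro absint_bounded[where M=M]) (auto intro: continuous_on_subset[OF assms])
qed

lemma int_cball_sub:
  fixes f :: "real^3 \<Rightarrow> 'b::euclidean_space"
  assumes "continuous_on (cball p \<eta>) f"
  shows "f integrable_on ball p \<eta>"
  using absint_cball_sub[OF assms] set_lebesgue_integral_eq_integral(1) by blast

lemma integral_const_lm:
  assumes "S \<in> lmeasurable"
  shows "integral S (\<lambda>x. c) = c * measure lebesgue S"
proof -
  have "integral S (\<lambda>x. c *\<^sub>R (1::real)) = c *\<^sub>R integral S (\<lambda>x. 1)"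
    by (rule integral_cmul)
  then show ?thesis using assms by (simp add: lmeasure_integral)
qed

lemma Kf_cont: "x \<notin> S \<Longrightarrow> continuous_on S (\<lambda>y. Kf \<tau> (x - y))"
  unfolding Kf_def by (intro continuous_intros) auto

lemma gK_cont: "x \<notin> S \<Longrightarrow> continuous_on S (\<lambda>y. gK \<tau> (x - y))"
  unfolding gK_def by (intro continuous_intros) auto

definition Ub :: "real \<Rightarrow> real^3 \<Rightarrow> real \<Rightarrow> real^3 \<Rightarrow> real" where
  "Ub \<tau> p \<eta> x = integral (ball p \<eta>) (\<lambda>y. Kf \<tau> (x - y))"

definition GU :: "real \<Rightarrow> real^3 \<Rightarrow> real \<Rightarrow> real^3 \<Rightarrow> real^3" where
  "GU \<tau> p \<eta> x = integral (ball p \<eta>) (\<lambda>y. gK \<tau> (x - y))"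

lemma vpot_eq: "vpot \<tau> (indicator (ball p \<eta>)) x = Ub \<tau> p \<eta> x / (4 * pi)"
proof -
  have eq: "(\<lambda>y. exp (- \<tau> * dist x y) / dist x y * indicator (ball p \<eta>) y)
      = (\<lambda>y. if y \<in> ball p \<eta> then Kf \<tau> (x - y) else 0)"
    by (auto simp: Kf_def dist_norm indicator_def fun_eq_iff)
  show ?thesis
    unfolding vpot_def Ub_def by (simp only: eq integral_restrict_UNIV) simp
qed

lemma gK_uc:
  assumes x: "x \<notin> cball p \<eta>" and e: "e > 0"
  shows "\<exists>\<delta>>0. \<delta> \<le> (dist p x - \<eta>)/2 \<and>
    (\<forall>x'. dist x' x < \<delta> \<longrightarrow> (\<forall>y\<in>cball p \<eta>. norm (gK \<tau> (x' - y) - gK \<tau> (x - y)) < e))"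
proof -
  define a where "a = dist p x - \<eta>"
  have a: "a > 0" using x by (auto simp: a_def)
  define Z where "Z = cball (0::real^3) (dist p x + \<eta> + a) - ball 0 (a/2)"
  have cZ: "compact Z" unfolding Z_def by (intro compact_diff) auto
  have "continuous_on Z (gK \<tau>)"
    unfolding gK_def Z_def using a by (intro continuous_intros) auto
  then have "uniformly_continuous_on Z (gK \<tau>)" using cZ compact_uniformly_continuous by blast
  then obtain d where d: "d > 0" "\<forall>z\<in>Z. \<forall>z'\<in>Z. dist z' z < d \<longrightarrow> dist (gK \<tau> z') (gK \<tau> z) < e"
    unfolding uniformly_continuous_on_def using e by metis
  show ?thesis
  proof (intro exI[of _ "min d (a/2)"] conjI allI impI ballI)
    show "min d (a/2) > 0" using d a by simp
    show "min d (a/2) \<le> (dist p x - \<eta>)/2" by (auto simp: a_def min_def)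
    fix x' y assume x': "dist x' x < min d (a/2)" and y: "y \<in> cball p \<eta>"
    have t1: "dist p x \<le> dist p y + dist y x" by (rule dist_triangle)
    have t2: "dist y x \<le> dist y p + dist p x" by (rule dist_triangle)
    have t3: "dist y x \<le> dist y x' + dist x' x" by (rule dist_triangle)
    have t4: "dist y x' \<le> dist y x + dist x x'" by (rule dist_triangle)
    have yp: "dist p y \<le> \<eta>" using y by simp
    have "x - y \<in> Z" unfolding Z_def a_def using t1 t2 yp a unfolding a_def
      by (auto simp: dist_norm norm_minus_commute dist_commute)
    moreover have "x' - y \<in> Z" unfolding Z_def a_def using t1 t2 t3 t4 yp a x' unfolding a_def
      by (auto simp: dist_norm norm_minus_commute dist_commute)
    moreover have "dist (x' - y) (x - y) < d" using x' by (simp add: dist_norm)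
    ultimately have "dist (gK \<tau> (x' - y)) (gK \<tau> (x - y)) < e" using d(2) by blast
    then show "norm (gK \<tau> (x' - y) - gK \<tau> (x - y)) < e" by (simp add: dist_norm)
  qed
qed

lemma Ub_deriv:
  assumes x: "x \<notin> cball p \<eta>"
  shows "(Ub \<tau> p \<eta> has_derivative (\<lambda>h. GU \<tau> p \<eta> x \<bullet> h)) (at x)"
  unfolding has_derivative_at_alt
proof (intro conjI allI impI)
  show "bounded_linear (\<lambda>h. GU \<tau> p \<eta> x \<bullet> h)" by (rule bounded_linear_inner_right)
  fix e :: real assume e: "e > 0"
  define V where "V = measure lebesgue (ball p \<eta>)"
  have V0: "V \<ge> 0" unfolding V_def by simp
  obtain \<delta> where \<delta>: "\<delta> > 0" "\<delta> \<le> (dist p x - \<eta>)/2"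
    "\<And>x' y. dist x' x < \<delta> \<Longrightarrow> y \<in> cball p \<eta> \<Longrightarrow> norm (gK \<tau> (x' - y) - gK \<tau> (x - y)) < e/(V+1)"
    using gK_uc[OF x, of "e/(V+1)" \<tau>] e V0 by auto
  have near: "x' \<notin> cball p \<eta>" if "dist x' x < \<delta>" for x'
  proof
    assume "x' \<in> cball p \<eta>"
    then have "dist p x' \<le> \<eta>" by simp
    moreover have "dist p x \<le> dist p x' + dist x' x" by (rule dist_triangle)
    moreover have "dist p x > \<eta>" using x by simp
    ultimately show False using that \<delta>(1,2) by argo
  qed
  show "\<exists>d>0. \<forall>x'. norm (x' - x) < d \<longrightarrow>
      norm (Ub \<tau> p \<eta> x' - Ub \<tau> p \<eta> x - GU \<tau> p \<eta> x \<bullet> (x' - x)) \<le> e * norm (x' - x)"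
  proof (intro exI[of _ \<delta>] conjI allI impI)
    show "\<delta> > 0" by fact
    fix x' assume x': "norm (x' - x) < \<delta>"
    then have x'c: "x' \<notin> cball p \<eta>" using near by (simp add: dist_norm)
    have pt: "norm (Kf \<tau> (x' - y) - Kf \<tau> (x - y) - gK \<tau> (x - y) \<bullet> (x' - x)) \<le> e/(V+1) * norm (x' - x)"
      if y: "y \<in> ball p \<eta>" for y
    proof -
      let ?f = "\<lambda>z. Kf \<tau> z - gK \<tau> (x - y) \<bullet> z"
      have "norm (?f (x' - y) - ?f (x - y)) \<le> e/(V+1) * norm ((x' - y) - (x - y))"
      proof (rule differentiable_bound[where S="ball (x - y) \<delta>" and f' = "\<lambda>z h. (gK \<tau> z - gK \<tau> (x - y)) \<bullet> h"])
        show "convex (ball (x - y) \<delta>)" by simp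
        fix z assume z: "z \<in> ball (x - y) \<delta>"
        have dz: "dist (z + y) x < \<delta>" using z by (simp add: dist_norm norm_minus_commute algebra_simps)
        then have "z + y \<notin> cball p \<eta>" by (rule near)
        then have z0: "z \<noteq> 0" using y by auto
        have "(?f has_derivative (\<lambda>h. gK \<tau> z \<bullet> h - gK \<tau> (x - y) \<bullet> h)) (at z)"
          by (intro has_derivative_diff Kf_deriv[OF z0] bounded_linear.has_derivative[OF bounded_linear_inner_right] has_derivative_ident)
        then show "(?f has_derivative (\<lambda>h. (gK \<tau> z - gK \<tau> (x - y)) \<bullet> h)) (at z within ball (x - y) \<delta>)"
          by (simp add: inner_diff_left has_derivative_at_withinI)
        have nb: "norm (gK \<tau> z - gK \<tau> (x - y)) < e/(V+1)"
          using \<delta>(3)[OF dz, of y] y by simp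
        show "onorm (\<lambda>h. (gK \<tau> z - gK \<tau> (x - y)) \<bullet> h) \<le> e/(V+1)"
        proof (rule onorm_le)
          fix h
          have "norm ((gK \<tau> z - gK \<tau> (x - y)) \<bullet> h) \<le> norm (gK \<tau> z - gK \<tau> (x - y)) * norm h"
            by (simp add: Cauchy_Schwarz_ineq2)
          also have "\<dots> \<le> e/(V+1) * norm h" using nb by (intro mult_right_mono) auto
          finally show "norm ((gK \<tau> z - gK \<tau> (x - y)) \<bullet> h) \<le> e/(V+1) * norm h" .
        qed
      next
        show "x' - y \<in> ball (x - y) \<delta>" using x' by (simp add: dist_norm norm_minus_commute)
        show "x - y \<in> ball (x - y) \<delta>" using \<delta> by simp
      qed
      then show ?thesis by (simp add: inner_diff_right algebra_simps)
    qed
    have i1: "(\<lambda>y. Kf \<tau> (x' - y)) integrable_on ball p \<eta>"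
      by (rule int_cball_sub[OF Kf_cont[OF x'c]])
    have i2: "(\<lambda>y. Kf \<tau> (x - y)) integrable_on ball p \<eta>"
      by (rule int_cball_sub[OF Kf_cont[OF x]])
    have i3: "(\<lambda>y. gK \<tau> (x - y)) integrable_on ball p \<eta>"
      by (rule int_cball_sub[OF gK_cont[OF x]])
    have i4: "(\<lambda>y. gK \<tau> (x - y) \<bullet> (x' - x)) integrable_on ball p \<eta>"
      using integrable_linear[OF i3 bounded_linear_inner_left[of "x' - x"]] by (simp add: o_def)
    have g: "GU \<tau> p \<eta> x \<bullet> (x' - x) = integral (ball p \<eta>) (\<lambda>y. gK \<tau> (x - y) \<bullet> (x' - x))"
      using integral_linear[OF i3 bounded_linear_inner_left[of "x' - x"]] by (simp add: o_def GU_def)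
    have "Ub \<tau> p \<eta> x' - Ub \<tau> p \<eta> x - GU \<tau> p \<eta> x \<bullet> (x' - x)
        = integral (ball p \<eta>) (\<lambda>y. Kf \<tau> (x' - y) - Kf \<tau> (x - y) - gK \<tau> (x - y) \<bullet> (x' - x))"
      unfolding g Ub_def using i1 i2 i4 by (simp add: integral_diff integrable_diff)
    also have "norm \<dots> \<le> integral (ball p \<eta>) (\<lambda>y. e/(V+1) * norm (x' - x))"
      by (rule integral_norm_bound_integral) (use i1 i2 i4 pt in \<open>auto intro!: integrable_diff integrable_on_const\<close>)
    also have "\<dots> = e/(V+1) * norm (x' - x) * V"
      by (simp add: integral_const_lm V_def)
    also have "\<dots> \<le> e * norm (x' - x)"
    proof -
      have "e/(V+1) * V \<le> e" using e V0 by (simp add: field_simps)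
      then show ?thesis by (metis mult.commute mult.left_commute mult_right_mono norm_ge_zero)
    qed
    finally show "norm (Ub \<tau> p \<eta> x' - Ub \<tau> p \<eta> x - GU \<tau> p \<eta> x \<bullet> (x' - x)) \<le> e * norm (x' - x)" .
  qed
qed

lemma GU_cont:
  assumes x: "x \<notin> cball p \<eta>"
  shows "isCont (GU \<tau> p \<eta>) x"
  unfolding continuous_at_eps_delta
proof (intro allI impI)
  fix e :: real assume e: "e > 0"
  define V where "V = measure lebesgue (ball p \<eta>)"
  have V0: "V \<ge> 0" unfolding V_def by simp
  obtain \<delta> where \<delta>: "\<delta> > 0" "\<delta> \<le> (dist p x - \<eta>)/2"
    "\<And>x' y. dist x' x < \<delta> \<Longrightarrow> y \<in> cball p \<eta> \<Longrightarrow> norm (gK \<tau> (x' - y) - gK \<tau> (x - y)) < e/(V+1)"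
    using gK_uc[OF x, of "e/(V+1)" \<tau>] e V0 by auto
  show "\<exists>d>0. \<forall>x'. dist x' x < d \<longrightarrow> dist (GU \<tau> p \<eta> x') (GU \<tau> p \<eta> x) < e"
  proof (intro exI[of _ \<delta>] conjI allI impI)
    show "\<delta> > 0" by fact
    fix x' assume x': "dist x' x < \<delta>"
    have x'c: "x' \<notin> cball p \<eta>"
    proof
      assume "x' \<in> cball p \<eta>"
      then have "dist p x' \<le> \<eta>" by simp
      moreover have "dist p x \<le> dist p x' + dist x' x" by (rule dist_triangle)
      moreover have "dist p x > \<eta>" using x by simp
      ultimately show False using x' \<delta>(1,2) by argo
    qed
    have i1: "(\<lambda>y. gK \<tau> (x' - y)) integrable_on ball p \<eta>"
      by (rule int_cball_sub[OF gK_cont[OF x'c]])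
    have i2: "(\<lambda>y. gK \<tau> (x - y)) integrable_on ball p \<eta>"
      by (rule int_cball_sub[OF gK_cont[OF x]])
    have "dist (GU \<tau> p \<eta> x') (GU \<tau> p \<eta> x) = norm (integral (ball p \<eta>) (\<lambda>y. gK \<tau> (x' - y) - gK \<tau> (x - y)))"
      unfolding GU_def dist_norm using i1 i2 by (simp add: integral_diff)
    also have "\<dots> \<le> integral (ball p \<eta>) (\<lambda>y. e/(V+1))"
      by (rule integral_norm_bound_integral) (use i1 i2 \<delta>(3)[OF x'] in \<open>auto intro!: integrable_diff integrable_on_const less_imp_le\<close>)
    also have "\<dots> = e/(V+1) * V" by (simp add: integral_const_lm V_def)
    also have "\<dots> < e" using e V0 by (simp add: field_simps)
    finally show "dist (GU \<tau> p \<eta> x') (GU \<tau> p \<eta> x) < e" .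
  qed
qed

lemma integral_reflect_inv:
  fixes f :: "real^3 \<Rightarrow> real" and R T :: "real^3 \<Rightarrow> real^3"
  assumes RR: "\<And>y. R (R y) = y" and dR: "\<And>y. (R has_derivative T) (at y)"
    and lT: "linear T" and TT: "\<And>h. T (T h) = h"
    and f: "f absolutely_integrable_on UNIV"
  shows "integral UNIV (\<lambda>y. f (R y)) = integral UNIV f"
proof -
  define F where "F = (\<lambda>y. vec (f y) :: real^1)"
  have "matrix T ** matrix T = matrix (T \<circ> T)" using matrix_compose[OF lT lT] by simp
  also have "T \<circ> T = id" using TT by (auto simp: fun_eq_iff)
  finally have "det (matrix T) * det (matrix T) = 1"
    by (metis det_mul det_I matrix_id_mat_1)
  then have detT: "\<bar>det (matrix T)\<bar> = 1"
    using power2_eq_1_iff[of "det (matrix T)"] by (auto simp: power2_eq_square)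
  have surj: "R ` UNIV = UNIV" using RR by (metis surj_def)
  have inj: "inj_on R UNIV" using RR by (metis injI)
  have Fi: "F absolutely_integrable_on UNIV"
  proof -
    have "bounded_linear (vec :: real \<Rightarrow> real^1)"
      using linear_vec linear_conv_bounded_linear by blast
    then show ?thesis unfolding F_def using absolutely_integrable_linear[OF f, of vec] by (simp add: o_def)
  qed
  have "(\<lambda>x. \<bar>det (matrix T)\<bar> *\<^sub>R F (R x)) absolutely_integrable_on UNIV \<and>
           integral UNIV (\<lambda>x. \<bar>det (matrix T)\<bar> *\<^sub>R F (R x)) = integral UNIV F"
    using has_absolute_integral_change_of_variables[of UNIV R "\<lambda>_. T" F "integral UNIV F"] dR inj surj Fi
    by (auto intro: has_derivative_at_withinI)
  then have c1: "(\<lambda>x. F (R x)) absolutely_integrable_on UNIV" and c2: "integral UNIV (\<lambda>x. F (R x)) = integral UNIV F"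
    using detT by auto
  have "integral UNIV (\<lambda>y. f (R y)) = integral UNIV ((\<lambda>v. v $ 1) \<circ> (\<lambda>x. F (R x)))"
    by (simp add: F_def o_def)
  also have "\<dots> = integral UNIV (\<lambda>x. F (R x)) $ 1"
    by (rule integral_linear) (use c1 set_lebesgue_integral_eq_integral(1) in auto)
  also have "\<dots> = integral UNIV F $ 1" by (simp add: c2)
  also have "\<dots> = integral UNIV ((\<lambda>v. v $ 1) \<circ> F)"
    by (rule integral_linear[symmetric]) (use Fi set_lebesgue_integral_eq_integral(1) in auto)
  also have "\<dots> = integral UNIV f" by (simp add: F_def o_def)
  finally show ?thesis .
qed

definition Rf :: "real^3 \<Rightarrow> real^3 \<Rightarrow> real^3 \<Rightarrow> real^3" where
  "Rf p n y = y - (2 * ((y - p) \<bullet> n) / (n \<bullet> n)) *\<^sub>R n"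

definition Tf :: "real^3 \<Rightarrow> real^3 \<Rightarrow> real^3" where
  "Tf n h = h - (2 * (h \<bullet> n) / (n \<bullet> n)) *\<^sub>R n"

lemma Tf_linear: "linear (Tf n)"
  by (rule linearI) (auto simp: Tf_def inner_add_left algebra_simps add_divide_distrib scaleR_add_left)

lemma Tf_inv: "n \<noteq> 0 \<Longrightarrow> Tf n (Tf n h) = h"
  by (simp add: Tf_def inner_diff_left algebra_simps)

lemma Rf_eq: "Rf p n y = p + Tf n (y - p)"
  by (simp add: Rf_def Tf_def)

lemma Rf_inv: "n \<noteq> 0 \<Longrightarrow> Rf p n (Rf p n y) = y"
  by (simp add: Rf_eq Tf_inv)

lemma Tf_norm: "n \<noteq> 0 \<Longrightarrow> norm (Tf n h) = norm h"
proof -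
  assume n: "n \<noteq> 0"
  have "Tf n h \<bullet> Tf n h = h \<bullet> h"
    using n by (simp add: Tf_def inner_diff_left inner_diff_right algebra_simps power2_eq_square inner_commute)
  then show ?thesis by (simp add: norm_eq_sqrt_inner)
qed

lemma Rf_dist: "n \<noteq> 0 \<Longrightarrow> norm (Rf p n a - Rf p n b) = norm (a - b)"
proof -
  assume n: "n \<noteq> 0"
  have "Rf p n a - Rf p n b = Tf n (a - b)"
    using linear_diff[OF Tf_linear, of n "a - p" "b - p"] by (simp add: Rf_eq)
  then show ?thesis using Tf_norm[OF n] by simp
qed

lemma Rf_deriv: "(Rf p n has_derivative Tf n) (at y)"
proof -
  have dT: "(Tf n has_derivative Tf n) (at y)"
    by (rule linear_imp_has_derivative[OF Tf_linear])
  have "((\<lambda>y. p + (Tf n y - Tf n p)) has_derivative (\<lambda>h. 0 + (Tf n h - 0))) (at y)"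
    by (intro has_derivative_add has_derivative_diff has_derivative_const dT)
  then have "((\<lambda>y. p + (Tf n y - Tf n p)) has_derivative Tf n) (at y)" by simp
  moreover have "(\<lambda>y. p + (Tf n y - Tf n p)) = Rf p n"
    using linear_diff[OF Tf_linear, of n] by (simp add: Rf_eq fun_eq_iff)
  ultimately show ?thesis by simp
qed

lemma Ub_reflect:
  assumes n: "n \<noteq> 0" and z: "z \<notin> cball p \<eta>"
  shows "Ub \<tau> p \<eta> (Rf p n z) = Ub \<tau> p \<eta> z"
proof -
  let ?R = "Rf p n"
  have Rp: "?R p = p" by (simp add: Rf_def)
  have dR: "dist p (?R y) = dist p y" for y
    using Rf_dist[OF n, of p p y] Rp by (simp add: dist_norm)
  define h where "h = (\<lambda>y. if y \<in> ball p \<eta> then Kf \<tau> (z - y) else 0)"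
  have hi: "h absolutely_integrable_on UNIV"
    unfolding h_def absolutely_integrable_restrict_UNIV
    by (rule absint_cball_sub[OF Kf_cont[OF z]])
  have "(\<lambda>y. h (?R y)) = (\<lambda>y. if y \<in> ball p \<eta> then Kf \<tau> (?R z - y) else 0)"
  (is "_ = ?rhs")
  proof
    fix y
    have "norm (z - ?R y) = norm (?R z - y)"
      using Rf_dist[OF n, of p z "?R y"] Rf_inv[OF n] by simp
    then show "h (?R y) = (if y \<in> ball p \<eta> then Kf \<tau> (?R z - y) else 0)"
      unfolding h_def using dR[of y] by (simp add: Kf_def)
  qed
  note eqR = this
  have "Ub \<tau> p \<eta> (?R z) = integral UNIV (\<lambda>y. h (?R y))"
    unfolding Ub_def by (simp only: eqR integral_restrict_UNIV)
  also have "\<dots> = integral UNIV h"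
    by (rule integral_reflect_inv[OF Rf_inv[OF n] Rf_deriv Tf_linear Tf_inv[OF n] hi])
  also have "\<dots> = Ub \<tau> p \<eta> z" unfolding h_def Ub_def by (simp only: integral_restrict_UNIV)
  finally show ?thesis .
qed

lemma GU_perp:
  assumes x: "x \<notin> cball p \<eta>" and nx: "n \<bullet> (x - p) = 0"
  shows "GU \<tau> p \<eta> x \<bullet> n = 0"
proof (cases "n = 0")
  case True then show ?thesis by simp
next
  case n: False
  let ?R = "Rf p n" and ?L = "\<lambda>h. GU \<tau> p \<eta> x \<bullet> h"
  have Rx: "?R x = x" using nx by (simp add: Rf_def inner_commute)
  have dL: "(Ub \<tau> p \<eta> has_derivative ?L) (at x)" by (rule Ub_deriv[OF x])
  have "((Ub \<tau> p \<eta> \<circ> ?R) has_derivative (?L \<circ> Tf n)) (at x)"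
    by (rule diff_chain_at[OF Rf_deriv]) (use dL Rx in simp)
  then have "(Ub \<tau> p \<eta> has_derivative (?L \<circ> Tf n)) (at x)"
    by (rule has_derivative_transform_within_open[where s="- cball p \<eta>"])
       (use x Ub_reflect[OF n] in auto)
  then have "?L \<circ> Tf n = ?L" using dL by (rule has_derivative_unique)
  then have "?L (Tf n n) = ?L n" by (metis comp_apply)
  moreover have "Tf n n = - n"
  proof -
    have c2: "2 * (n \<bullet> n) / (n \<bullet> n) = (2::real)" using n by simp
    have "Tf n n = n - (2::real) *\<^sub>R n" by (simp only: Tf_def c2)
    also have "\<dots> = - n" by (simp add: scaleR_2 algebra_simps)
    finally show ?thesis .
  qed
  ultimately show ?thesis by simp
qed

lemma GU_radial:
  assumes x: "x \<notin> cball p \<eta>" and eta: "\<eta> \<ge> 0"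
  defines "\<omega> \<equiv> (1 / norm (x - p)) *\<^sub>R (x - p)"
  shows "GU \<tau> p \<eta> x = (GU \<tau> p \<eta> x \<bullet> \<omega>) *\<^sub>R \<omega>"
proof -
  let ?G = "GU \<tau> p \<eta> x"
  have xp: "norm (x - p) > 0" using x eta by (auto simp: dist_norm)
  have ww: "\<omega> \<bullet> \<omega> = 1" using xp by (simp add: \<omega>_def power2_norm_eq_inner[symmetric] power2_eq_square)
  have wx: "\<omega> \<bullet> (x - p) = norm (x - p)" using xp
    by (simp add: \<omega>_def power2_norm_eq_inner[symmetric] power2_eq_square)
  define m where "m = ?G - (?G \<bullet> \<omega>) *\<^sub>R \<omega>"
  have "m \<bullet> (x - p) = ?G \<bullet> (x - p) - (?G \<bullet> \<omega>) * norm (x - p)"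
    by (simp add: m_def inner_diff_left wx)
  also have "?G \<bullet> \<omega> = (?G \<bullet> (x - p)) / norm (x - p)" by (simp add: \<omega>_def)
  finally have "m \<bullet> (x - p) = 0" using xp by simp
  then have Gm: "?G \<bullet> m = 0" using GU_perp[OF x] by blast
  have wm: "\<omega> \<bullet> m = 0" using ww by (simp add: m_def inner_diff_right inner_commute)
  have "m \<bullet> m = ?G \<bullet> m - (?G \<bullet> \<omega>) * (\<omega> \<bullet> m)" by (simp add: m_def inner_diff_left)
  then have "m \<bullet> m = 0" using Gm wm by simp
  then have "m = 0" by simp
  then show ?thesis by (simp add: m_def)
qed

lemma Kf_mono:
  assumes "z \<noteq> 0" "norm z \<le> norm z'" "\<tau> \<ge> 0"
  shows "Kf \<tau> z' \<le> Kf \<tau> z"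
  unfolding Kf_def using assms
  by (intro frac_le) (auto intro: mult_left_mono)

lemma ray_facts:
  fixes x p y :: "real^3"
  assumes x: "x \<notin> cball p \<eta>" and eta: "\<eta> \<ge> 0" and s: "s \<ge> 0" and y: "y \<in> cball p \<eta>"
  defines "\<omega> \<equiv> (1 / norm (x - p)) *\<^sub>R (x - p)"
  shows "norm (x - y) \<le> norm (x + s *\<^sub>R \<omega> - y)"
    and "norm (x + s *\<^sub>R \<omega> - y) \<le> norm (x - y) + s"
    and "norm (x - y) \<ge> norm (x - p) - \<eta>"
    and "norm (x + s *\<^sub>R \<omega> - p) = norm (x - p) + s"
proof -
  have xp: "norm (x - p) > \<eta>" using x by (auto simp: dist_norm norm_minus_commute)
  then have xp0: "norm (x - p) > 0" using eta by linarith
  have nw: "norm \<omega> = 1" using xp0 by (simp add: \<omega>_def)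
  have wx: "(x - p) \<bullet> \<omega> = norm (x - p)"
    using xp0 by (simp add: \<omega>_def power2_norm_eq_inner[symmetric] power2_eq_square)
  have yp: "norm (y - p) \<le> \<eta>" using y by (simp add: dist_norm norm_minus_commute)
  have "(y - p) \<bullet> \<omega> \<le> norm (y - p) * norm \<omega>" by (rule norm_cauchy_schwarz)
  then have "(y - p) \<bullet> \<omega> \<le> \<eta>" using yp nw by simp
  moreover have "(x - y) \<bullet> \<omega> = (x - p) \<bullet> \<omega> - (y - p) \<bullet> \<omega>" by (simp add: inner_diff_left)
  ultimately have pos: "(x - y) \<bullet> \<omega> \<ge> 0" using wx xp by linarith
  have "(x - y) \<bullet> (x - y) \<le> (x + s *\<^sub>R \<omega> - y) \<bullet> (x + s *\<^sub>R \<omega> - y)"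
  proof -
    have "(x + s *\<^sub>R \<omega> - y) = (x - y) + s *\<^sub>R \<omega>" by simp
    then have "(x + s *\<^sub>R \<omega> - y) \<bullet> (x + s *\<^sub>R \<omega> - y) = (x - y) \<bullet> (x - y) + 2 * s * ((x - y) \<bullet> \<omega>) + s * s * (\<omega> \<bullet> \<omega>)"
      by (simp add: inner_add_left inner_add_right inner_commute algebra_simps)
    moreover have "0 \<le> 2 * s * ((x - y) \<bullet> \<omega>) + s * s * (\<omega> \<bullet> \<omega>)" using pos s by simp
    ultimately show ?thesis by linarith
  qed
  then show "norm (x - y) \<le> norm (x + s *\<^sub>R \<omega> - y)" by (simp add: norm_le)
  have "norm (x + s *\<^sub>R \<omega> - y) = norm ((x - y) + s *\<^sub>R \<omega>)" by (simp add: algebra_simps)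
  also have "\<dots> \<le> norm (x - y) + norm (s *\<^sub>R \<omega>)" by (rule norm_triangle_ineq)
  also have "\<dots> = norm (x - y) + s" using nw s by simp
  finally show "norm (x + s *\<^sub>R \<omega> - y) \<le> norm (x - y) + s" .
  have "norm (x - p) \<le> norm (x - y) + norm (y - p)"
    using norm_triangle_ineq[of "x - y" "y - p"] by simp
  then show "norm (x - y) \<ge> norm (x - p) - \<eta>" using yp by linarith
  have "x + s *\<^sub>R \<omega> - p = (1 + s / norm (x - p)) *\<^sub>R (x - p)"
    using xp0 by (simp add: \<omega>_def algebra_simps scaleR_add_left)
  then have "norm (x + s *\<^sub>R \<omega> - p) = \<bar>1 + s / norm (x - p)\<bar> * norm (x - p)"
    by (simp only: norm_scaleR)
  also have "\<bar>1 + s / norm (x - p)\<bar> = 1 + s / norm (x - p)" using xp0 s by simp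
  finally show "norm (x + s *\<^sub>R \<omega> - p) = norm (x - p) + s"
    using xp0 s by (simp add: field_simps)
qed

lemma notin_cball_ray:
  fixes x p :: "real^3"
  assumes x: "x \<notin> cball p \<eta>" and eta: "\<eta> \<ge> 0" and s: "s \<ge> 0"
  shows "x + s *\<^sub>R ((1 / norm (x - p)) *\<^sub>R (x - p)) \<notin> cball p \<eta>"
proof -
  have xp: "norm (x - p) > \<eta>" using x by (auto simp: dist_norm norm_minus_commute)
  have "dist p (x + s *\<^sub>R ((1 / norm (x - p)) *\<^sub>R (x - p))) = norm (x + s *\<^sub>R ((1 / norm (x - p)) *\<^sub>R (x - p)) - p)"
    by (simp add: dist_norm norm_minus_commute)
  also have "\<dots> = norm (x - p) + s" by (rule ray_facts(4)[OF x eta s, where y=p]) (use eta in simp)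
  finally show ?thesis using xp s by simp
qed

lemma Ub_ray:
  fixes x p :: "real^3"
  assumes x: "x \<notin> cball p \<eta>" and eta: "\<eta> \<ge> 0" and s: "s \<ge> 0" and tau: "\<tau> \<ge> 0"
  defines "\<omega> \<equiv> (1 / norm (x - p)) *\<^sub>R (x - p)"
  defines "d \<equiv> norm (x - p) - \<eta>"
  shows "Ub \<tau> p \<eta> (x + s *\<^sub>R \<omega>) \<le> Ub \<tau> p \<eta> x"
    and "Ub \<tau> p \<eta> x * (exp (- \<tau> * s) * d / (d + s)) \<le> Ub \<tau> p \<eta> (x + s *\<^sub>R \<omega>)"
proof -
  have x2: "x + s *\<^sub>R \<omega> \<notin> cball p \<eta>" unfolding \<omega>_def by (rule notin_cball_ray[OF x eta s])
  have d0: "d > 0" using x by (auto simp: d_def dist_norm norm_minus_commute)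
  have i1: "(\<lambda>y. Kf \<tau> (x - y)) integrable_on ball p \<eta>"
    by (rule int_cball_sub[OF Kf_cont[OF x]])
  have i2: "(\<lambda>y. Kf \<tau> (x + s *\<^sub>R \<omega> - y)) integrable_on ball p \<eta>"
    by (rule int_cball_sub[OF Kf_cont[OF x2]])
  have pt1: "Kf \<tau> (x + s *\<^sub>R \<omega> - y) \<le> Kf \<tau> (x - y)" if y: "y \<in> ball p \<eta>" for y
  proof (rule Kf_mono[OF _ _ tau])
    show "x - y \<noteq> 0" using x y by auto
    show "norm (x - y) \<le> norm (x + s *\<^sub>R \<omega> - y)"
      unfolding \<omega>_def by (rule ray_facts(1)[OF x eta s]) (use y in auto)
  qed
  have pt2: "Kf \<tau> (x - y) * (exp (- \<tau> * s) * d / (d + s)) \<le> Kf \<tau> (x + s *\<^sub>R \<omega> - y)"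
    if y: "y \<in> ball p \<eta>" for y
  proof -
    let ?a = "norm (x - y)" and ?b = "norm (x + s *\<^sub>R \<omega> - y)"
    have yc: "y \<in> cball p \<eta>" using y by auto
    have ad: "?a \<ge> d" unfolding d_def by (rule ray_facts(3)[OF x eta s yc])
    have ab: "?a \<le> ?b" unfolding \<omega>_def by (rule ray_facts(1)[OF x eta s yc])
    have ba: "?b \<le> ?a + s" unfolding \<omega>_def by (rule ray_facts(2)[OF x eta s yc])
    have a0: "?a > 0" using ad d0 by linarith
    have e1: "exp (- \<tau> * (?a + s)) \<le> exp (- \<tau> * ?b)" using mult_left_mono[OF ba tau] by simp
    have "exp (- \<tau> * (?a + s)) / (?a + s) \<le> exp (- \<tau> * ?b) / ?b"
      using a0 ab by - (rule frac_le[OF _ e1 _ ba], simp, linarith)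
    moreover have "exp (- \<tau> * ?a) / ?a * (exp (- \<tau> * s) * d / (d + s)) \<le> exp (- \<tau> * (?a + s)) / (?a + s)"
    proof -
      have "d * s \<le> ?a * s" using ad s by (rule mult_right_mono)
      then have "d * (?a + s) \<le> ?a * (d + s)" by (simp add: algebra_simps)
      moreover have "?a * (d + s) > 0" using a0 d0 s by simp
      moreover have "?a + s > 0" using a0 s by linarith
      ultimately have "d / (?a * (d + s)) \<le> 1 / (?a + s)" by (simp add: field_simps)
      then have "exp (- \<tau> * ?a) * exp (- \<tau> * s) * (d / (?a * (d + s))) \<le> exp (- \<tau> * ?a) * exp (- \<tau> * s) * (1 / (?a + s))"
        by (intro mult_left_mono) auto
      moreover have "exp (- \<tau> * (?a + s)) = exp (- \<tau> * ?a) * exp (- \<tau> * s)"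
        by (simp add: algebra_simps exp_add[symmetric])
      ultimately show ?thesis by (simp add: field_simps)
    qed
    ultimately show ?thesis by (simp add: Kf_def)
  qed
  show "Ub \<tau> p \<eta> (x + s *\<^sub>R \<omega>) \<le> Ub \<tau> p \<eta> x"
    unfolding Ub_def by (rule integral_le[OF i2 i1]) (use pt1 in auto)
  have "Ub \<tau> p \<eta> x * (exp (- \<tau> * s) * d / (d + s)) = integral (ball p \<eta>) (\<lambda>y. Kf \<tau> (x - y) * (exp (- \<tau> * s) * d / (d + s)))"
    unfolding Ub_def by (simp add: mult.commute)
  also have "\<dots> \<le> Ub \<tau> p \<eta> (x + s *\<^sub>R \<omega>)"
  proof -
    have i3: "(\<lambda>y. Kf \<tau> (x - y) * (exp (- \<tau> * s) * d / (d + s))) integrable_on ball p \<eta>"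
      using integrable_cmul[OF i1, of "exp (- \<tau> * s) * d / (d + s)"] by (simp add: mult.commute)
    show ?thesis unfolding Ub_def by (rule integral_le[OF i3 i2]) (use pt2 in auto)
  qed
  finally show "Ub \<tau> p \<eta> x * (exp (- \<tau> * s) * d / (d + s)) \<le> Ub \<tau> p \<eta> (x + s *\<^sub>R \<omega>)" .
qed

lemma GU_bounds:
  fixes x p :: "real^3"
  assumes x: "x \<notin> cball p \<eta>" and eta: "\<eta> \<ge> 0" and tau: "\<tau> \<ge> 0"
  defines "\<omega> \<equiv> (1 / norm (x - p)) *\<^sub>R (x - p)"
  defines "d \<equiv> norm (x - p) - \<eta>"
  shows "GU \<tau> p \<eta> x \<bullet> \<omega> \<le> 0"
    and "- (\<tau> + 1 / d) * Ub \<tau> p \<eta> x \<le> GU \<tau> p \<eta> x \<bullet> \<omega>"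
proof -
  have d0: "d > 0" using x by (auto simp: d_def dist_norm norm_minus_commute)
  define g where "g = (\<lambda>s. Ub \<tau> p \<eta> (x + s *\<^sub>R \<omega>))"
  let ?l = "GU \<tau> p \<eta> x \<bullet> \<omega>"
  have dU: "(Ub \<tau> p \<eta> has_derivative (\<lambda>h. GU \<tau> p \<eta> x \<bullet> h)) (at (x + 0 *\<^sub>R \<omega>))"
    using Ub_deriv[OF x] by simp
  have dl: "((\<lambda>s. x + s *\<^sub>R \<omega>) has_derivative (\<lambda>s. s *\<^sub>R \<omega>)) (at 0)"
    by (intro derivative_eq_intros) auto
  have "((Ub \<tau> p \<eta> \<circ> (\<lambda>s. x + s *\<^sub>R \<omega>)) has_derivative ((\<lambda>h. GU \<tau> p \<eta> x \<bullet> h) \<circ> (\<lambda>s. s *\<^sub>R \<omega>))) (at 0)"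
    by (rule diff_chain_at[OF dl dU])
  moreover have "((\<lambda>h. GU \<tau> p \<eta> x \<bullet> h) \<circ> (\<lambda>s. s *\<^sub>R \<omega>)) = (*) ?l"
    by (auto simp: fun_eq_iff)
  ultimately have dg: "(g has_real_derivative ?l) (at 0)"
    by (simp add: has_field_derivative_def g_def o_def)
  have g0: "g 0 = Ub \<tau> p \<eta> x" by (simp add: g_def)
  show "?l \<le> 0"
  proof (rule ccontr)
    assume "\<not> ?l \<le> 0"
    then obtain e where e: "e > 0" "\<And>h. h > 0 \<Longrightarrow> h < e \<Longrightarrow> g 0 < g (0 + h)"
      using DERIV_pos_inc_right[OF dg] by force
    have "g 0 < g (e/2)" using e(2)[of "e/2"] e(1) by simp
    moreover have "g (e/2) \<le> g 0"
      unfolding g_def using Ub_ray(1)[OF x eta _ tau, of "e/2"] e(1) by (simp add: \<omega>_def)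
    ultimately show False by simp
  qed
  define k where "k = (\<lambda>s. exp (- \<tau> * s) * d / (d + s))"
  have dk: "(k has_real_derivative (- \<tau> - 1 / d)) (at 0)"
  proof -
    have "(k has_real_derivative ((exp (- \<tau> * 0) * (- \<tau>) * d) * (d + 0) - exp (- \<tau> * 0) * d * 1) / ((d + 0) * (d + 0))) (at 0)"
      unfolding k_def using d0
      by (intro derivative_eq_intros) (auto simp: power2_eq_square)
    moreover have "((exp (- \<tau> * 0) * (- \<tau>) * d) * (d + 0) - exp (- \<tau> * 0) * d * 1) / ((d + 0) * (d + 0)) = - \<tau> - 1 / d"
    proof -
      have "((exp (- \<tau> * 0) * (- \<tau>) * d) * (d + 0) - exp (- \<tau> * 0) * d * 1) / ((d + 0) * (d + 0))
          = (- \<tau> * (d * d) - d) / (d * d)" by simp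
      also have "\<dots> = - \<tau> - 1 / d" using d0 by (simp add: field_simps)
      finally show ?thesis .
    qed
    ultimately show ?thesis by simp
  qed
  define q where "q = (\<lambda>s. g s - Ub \<tau> p \<eta> x * k s)"
  have dq: "(q has_real_derivative (?l - Ub \<tau> p \<eta> x * (- \<tau> - 1 / d))) (at 0)"
    unfolding q_def by (rule DERIV_diff[OF dg DERIV_cmult[OF dk]])
  show "- (\<tau> + 1 / d) * Ub \<tau> p \<eta> x \<le> ?l"
  proof (rule ccontr)
    assume "\<not> - (\<tau> + 1 / d) * Ub \<tau> p \<eta> x \<le> ?l"
    then have "?l - Ub \<tau> p \<eta> x * (- \<tau> - 1 / d) < 0" by (simp add: algebra_simps)
    then obtain e where e: "e > 0" "\<And>h. h > 0 \<Longrightarrow> h < e \<Longrightarrow> q (0 + h) < q 0"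
      using DERIV_neg_dec_right[OF dq] by force
    have "q (e/2) < q 0" using e(2)[of "e/2"] e(1) by simp
    moreover have "q 0 = 0" using d0 by (simp add: q_def g_def k_def)
    moreover have "q (e/2) \<ge> 0"
      unfolding q_def g_def k_def using Ub_ray(2)[OF x eta _ tau, of "e/2"] e(1) by (simp add: \<omega>_def d_def)
    ultimately show False by simp
  qed
qed

lemma Kf_nonneg: "Kf \<tau> z \<ge> 0" by (simp add: Kf_def)

lemma Ub_nonneg:
  assumes "x \<notin> cball p \<eta>"
  shows "Ub \<tau> p \<eta> x \<ge> 0"
  unfolding Ub_def by (rule integral_nonneg[OF int_cball_sub[OF Kf_cont[OF assms]]]) (simp add: Kf_nonneg)

lemma Ub_lower:
  fixes x p :: "real^3"
  assumes x: "x \<notin> cball p \<eta>" and s: "0 < s" "s \<le> \<eta>" and tau: "\<tau> \<ge> 0"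
  shows "measure lebesgue (ball (0::real^3) 1) * s^3 *
     (exp (- \<tau> * (norm (x - p) - \<eta> + 2 * s)) / (norm (x - p) - \<eta> + 2 * s)) \<le> Ub \<tau> p \<eta> x"
proof -
  define n where "n = norm (x - p)"
  have xp: "n > \<eta>" using x by (auto simp: n_def dist_norm norm_minus_commute)
  have n0: "n > 0" using xp s by linarith
  define \<omega> where "\<omega> = (1 / n) *\<^sub>R (x - p)"
  have nw: "norm \<omega> = 1" using n0 by (simp add: \<omega>_def n_def)
  define q where "q = p + (\<eta> - s) *\<^sub>R \<omega>"
  define N where "N = n - \<eta> + 2 * s"
  have N0: "N > 0" using xp s by (simp add: N_def)
  have pq: "dist p q = \<eta> - s" using nw s by (simp add: q_def dist_norm)
  have sub: "cball q s \<subseteq> cball p \<eta>"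
  proof
    fix y assume "y \<in> cball q s"
    then have "dist q y \<le> s" by simp
    moreover have "dist p y \<le> dist p q + dist q y" by (rule dist_triangle)
    ultimately show "y \<in> cball p \<eta>" using pq by simp
  qed
  have subb: "ball q s \<subseteq> ball p \<eta>"
  proof
    fix y assume "y \<in> ball q s"
    then have "dist q y < s" by simp
    moreover have "dist p y \<le> dist p q + dist q y" by (rule dist_triangle)
    ultimately show "y \<in> ball p \<eta>" using pq by simp
  qed
  have xq: "norm (x - q) = n - \<eta> + s"
  proof -
    have "x - q = (1 - (\<eta> - s) / n) *\<^sub>R (x - p)"
      using n0 by (simp add: q_def \<omega>_def algebra_simps scaleR_diff_left)
    then have "norm (x - q) = \<bar>1 - (\<eta> - s) / n\<bar> * n" by (simp add: n_def)
    also have "\<bar>1 - (\<eta> - s) / n\<bar> = 1 - (\<eta> - s) / n" using xp n0 s by (simp add: field_simps)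
    also have "(1 - (\<eta> - s) / n) * n = n - \<eta> + s" using n0 by (simp add: field_simps)
    finally show ?thesis .
  qed
  have pt: "exp (- \<tau> * N) / N \<le> Kf \<tau> (x - y)" if y: "y \<in> ball q s" for y
  proof -
    have "norm (x - y) \<le> norm (x - q) + norm (q - y)" using norm_triangle_ineq[of "x - q" "q - y"] by simp
    moreover have "norm (q - y) < s" using y by (simp add: dist_norm)
    ultimately have a1: "norm (x - y) \<le> N" using xq by (simp add: N_def)
    have "y \<in> cball q s" using y by simp
    then have "y \<in> cball p \<eta>" using sub by blast
    then have a0: "norm (x - y) > 0" using x by auto
    have e1: "exp (- \<tau> * N) \<le> exp (- \<tau> * norm (x - y))" using mult_left_mono[OF a1 tau] by simp
    show ?thesis unfolding Kf_def
      using a0 a1 by - (rule frac_le[OF _ e1 _ a1], simp, linarith)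
  qed
  have xq': "x \<notin> cball q s" using x sub by auto
  have i1: "(\<lambda>y. Kf \<tau> (x - y)) integrable_on ball q s" by (rule int_cball_sub[OF Kf_cont[OF xq']])
  have i2: "(\<lambda>y. Kf \<tau> (x - y)) integrable_on ball p \<eta>" by (rule int_cball_sub[OF Kf_cont[OF x]])
  have mb: "measure lebesgue (ball q s) = s^3 * measure lebesgue (ball (0::real^3) 1)"
    using content_ball_conv_unit_ball[of s q] s by simp
  have "measure lebesgue (ball (0::real^3) 1) * s^3 * (exp (- \<tau> * N) / N) = integral (ball q s) (\<lambda>y. exp (- \<tau> * N) / N)"
    by (simp add: integral_const_lm mb)
  also have "\<dots> \<le> integral (ball q s) (\<lambda>y. Kf \<tau> (x - y))"
    by (rule integral_le) (use i1 pt in \<open>auto intro: integrable_on_const\<close>)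
  also have "\<dots> \<le> Ub \<tau> p \<eta> x"
    unfolding Ub_def by (rule integral_subset_le[OF subb i1 i2]) (simp add: Kf_nonneg)
  finally show ?thesis by (simp add: N_def n_def)
qed

lemma not_segment:
  fixes x p p' :: "real^3"
  assumes "x \<notin> closed_segment p p'" "x \<noteq> p" "x \<noteq> p'"
  shows "(x - p) \<bullet> (x - p') > - (norm (x - p) * norm (x - p'))"
proof (rule ccontr)
  let ?a = "x - p" and ?b = "x - p'"
  assume "\<not> ?thesis"
  then have le: "?a \<bullet> ?b \<le> - (norm ?a * norm ?b)" by simp
  have cs: "?a \<bullet> (- ?b) \<le> norm ?a * norm (- ?b)" by (rule norm_cauchy_schwarz)
  have e1: "?a \<bullet> (- ?b) = - (?a \<bullet> ?b)" by (rule inner_minus_right)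
  have e2: "norm (- ?b) = norm ?b" by (rule norm_minus_cancel)
  have cs': "?a \<bullet> (- ?b) \<le> norm ?a * norm ?b" using cs e2 by simp
  have h: "?a \<bullet> (- ?b) = norm ?a * norm ?b" using cs' le e1 by linarith
  have eq: "norm ?a *\<^sub>R (- ?b) = norm (- ?b) *\<^sub>R ?a" by (metis norm_cauchy_schwarz_eq e2 h)
  define A where "A = norm ?a" define Bn where "Bn = norm ?b"
  have A0: "A > 0" "Bn > 0" using assms by (auto simp: A_def Bn_def)
  have eq': "A *\<^sub>R (- (x - p')) = Bn *\<^sub>R (x - p)"
    using eq unfolding A_def Bn_def by (simp only: e2)
  have h1: "(A + Bn) *\<^sub>R x = Bn *\<^sub>R p + A *\<^sub>R p'"
    using eq' by (simp add: algebra_simps scaleR_diff_right)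
  have AB: "A + Bn \<noteq> 0" using A0 by simp
  have "x = (1 / (A + Bn)) *\<^sub>R ((A + Bn) *\<^sub>R x)" using AB by simp
  also have "\<dots> = (Bn / (A + Bn)) *\<^sub>R p + (A / (A + Bn)) *\<^sub>R p'"
    unfolding h1 by (simp add: scaleR_add_right)
  also have "Bn / (A + Bn) = 1 - A / (A + Bn)" using AB by (simp add: field_simps)
  finally have "x = (1 - A / (A + Bn)) *\<^sub>R p + (A / (A + Bn)) *\<^sub>R p'" .
  moreover have "0 \<le> A / (A + Bn)" "A / (A + Bn) \<le> 1" using A0 by auto
  ultimately have "x \<in> closed_segment p p'" unfolding in_segment by blast
  with assms show False by simp
qed

lemma vpot_deriv:
  assumes "x \<notin> cball p \<eta>"
  shows "frechet_derivative (vpot \<tau> (indicator (ball p \<eta>))) (at x) = (\<lambda>h. (GU \<tau> p \<eta> x \<bullet> h) / (4 * pi))"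
proof -
  have e: "vpot \<tau> (indicator (ball p \<eta>)) = (\<lambda>x. (1 / (4 * pi)) *\<^sub>R Ub \<tau> p \<eta> x)"
    by (auto simp: fun_eq_iff vpot_eq)
  have "((\<lambda>x. (1 / (4 * pi)) *\<^sub>R Ub \<tau> p \<eta> x) has_derivative (\<lambda>h. (1 / (4 * pi)) *\<^sub>R (GU \<tau> p \<eta> x \<bullet> h))) (at x)"
    by (rule has_derivative_scaleR_right[OF Ub_deriv[OF assms]])
  then show ?thesis unfolding e by (metis (no_types, lifting) frechet_derivative_at ext divide_inverse mult.commute real_scaleR_def inverse_eq_divide)
qed

lemma grad_dot_eq:
  assumes "x \<notin> cball p \<eta>" "x \<notin> cball p' \<eta>'"
  shows "grad_dot (vpot \<tau> (indicator (ball p \<eta>))) (vpot \<tau> (indicator (ball p' \<eta>'))) x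
       = (GU \<tau> p \<eta> x \<bullet> GU \<tau> p' \<eta>' x) / (16 * pi^2)"
proof -
  have "grad_dot (vpot \<tau> (indicator (ball p \<eta>))) (vpot \<tau> (indicator (ball p' \<eta>'))) x
      = (\<Sum>i\<in>UNIV. (GU \<tau> p \<eta> x $ i * GU \<tau> p' \<eta>' x $ i) / (16 * pi^2))"
    unfolding grad_dot_def vpot_deriv[OF assms(1)] vpot_deriv[OF assms(2)]
    by (simp add: inner_axis power2_eq_square)
  also have "\<dots> = (GU \<tau> p \<eta> x \<bullet> GU \<tau> p' \<eta>' x) / (16 * pi^2)"
    by (simp add: inner_vec_def sum_divide_distrib)
  finally show ?thesis .
qed

lemma poly_ineq:
  fixes c y :: real
  assumes "0 < c" "c \<le> 1" "0 \<le> y" "y \<le> c / 8"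
  shows "(1 - c) * (1 + y)^2 \<le> 1 - c / 2"
proof -
  have y1: "y \<le> 1" using assms by linarith
  have "y * y \<le> 1 * y" by (rule mult_right_mono[OF y1 assms(3)])
  then have "(1 + y)^2 \<le> 1 + 3 * y" using assms by (simp add: power2_eq_square algebra_simps)
  then have "(1 - c) * (1 + y)^2 \<le> (1 - c) * (1 + 3 * y)" using assms by (intro mult_left_mono) auto
  also have "\<dots> \<le> (1 - c) * (1 + 3 * c / 8)" using assms by (intro mult_left_mono) auto
  also have "\<dots> \<le> 1 - c / 2" using assms by (simp add: algebra_simps power2_eq_square)
  finally show ?thesis .
qed

lemma boundary_inner_ball:
  fixes D :: "(real^3) set"
  assumes C2: "C2_boundary D" and x0: "x0 \<in> frontier D"
  shows "\<exists>t1>0. \<exists>v \<beta>. 0 < \<beta> \<and> \<beta> \<le> 1 \<and> norm v = 1 \<and>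
           (\<forall>t. 0 < t \<and> t < t1 \<longrightarrow> ball (x0 + t *\<^sub>R v) (\<beta> * t) \<subseteq> D)"
proof -
  obtain U \<rho> where U: "open U" "x0 \<in> U" "C2_on \<rho> U"
      "\<forall>x\<in>U. frechet_derivative \<rho> (at x) \<noteq> (\<lambda>h. 0)" "D \<inter> U = {x\<in>U. \<rho> x < 0}"
    using C2 x0 unfolding C2_boundary_def by blast
  obtain D1 :: "real^3 \<Rightarrow> ((real^3) \<Rightarrow>\<^sub>L real)" where D1: "\<forall>x\<in>U. (\<rho> has_derivative blinfun_apply (D1 x)) (at x)"
    using U(3) unfolding C2_on_def by blast
  define L where "L = blinfun_apply (D1 x0)"
  have dr: "(\<rho> has_derivative L) (at x0)" using D1 U(2) by (simp add: L_def)
  have "frechet_derivative \<rho> (at x0) = L" using frechet_derivative_at[OF dr] by simp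
  then have "L \<noteq> (\<lambda>h. 0)" using U(4) U(2) by auto
  then obtain h where h: "L h \<noteq> 0" by auto
  define v0 where "v0 = (if L h < 0 then h else - h)"
  have Lv0: "L v0 < 0" using h by (auto simp: v0_def L_def blinfun.minus_right)
  then have v00: "v0 \<noteq> 0" by (auto simp: L_def)
  define v where "v = (1 / norm v0) *\<^sub>R v0"
  have nv: "norm v = 1" using v00 by (simp add: v_def)
  define \<alpha> where "\<alpha> = - L v"
  have \<alpha>: "\<alpha> > 0" using Lv0 v00 by (simp add: \<alpha>_def v_def L_def blinfun.scaleR_right divide_neg_pos)
  define K where "K = norm (D1 x0)"
  have K: "\<And>w. \<bar>L w\<bar> \<le> K * norm w" unfolding K_def L_def using norm_blinfun by (metis real_norm_def)
  have K0: "K \<ge> 0" by (simp add: K_def)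
  define \<beta> where "\<beta> = min (1/2) (\<alpha> / (2 * (K + 1)))"
  have \<beta>1: "0 < \<beta>" using \<alpha> K0 by (simp add: \<beta>_def)
  have \<beta>2: "\<beta> \<le> 1/2" unfolding \<beta>_def by (rule min.cobounded1)
  note \<beta> = \<beta>1 \<beta>2
  have K\<beta>: "K * \<beta> \<le> \<alpha> / 2"
  proof -
    have "K * \<beta> \<le> K * (\<alpha> / (2 * (K + 1)))" using K0 by (intro mult_left_mono) (auto simp: \<beta>_def)
    also have "\<dots> \<le> \<alpha> / 2" using K0 \<alpha> by (simp add: field_simps)
    finally show ?thesis .
  qed
  obtain \<delta> where \<delta>: "\<delta> > 0" "\<And>y. norm (y - x0) < \<delta> \<Longrightarrow> norm (\<rho> y - \<rho> x0 - L (y - x0)) \<le> \<alpha> / 8 * norm (y - x0)"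
    using dr \<alpha> unfolding has_derivative_at_alt by (metis zero_less_divide_iff zero_less_numeral)
  obtain \<delta>U where \<delta>U: "\<delta>U > 0" "ball x0 \<delta>U \<subseteq> U" using U(1,2) open_contains_ball by blast
  have r0: "\<rho> x0 \<le> 0"
  proof (rule ccontr)
    assume "\<not> \<rho> x0 \<le> 0"
    then have pos: "\<rho> x0 > 0" by simp
    have "continuous (at x0) \<rho>" using dr by (rule has_derivative_continuous)
    then obtain dc where dc: "dc > 0" "\<And>y. dist y x0 < dc \<Longrightarrow> dist (\<rho> y) (\<rho> x0) < \<rho> x0"
      unfolding continuous_at_eps_delta using pos by blast
    have "x0 \<in> closure D" using x0 by (simp add: frontier_def)
    then obtain y where y: "y \<in> D" "dist y x0 < min dc \<delta>U"
      using closure_approachable dc(1) \<delta>U(1) by (metis min_less_iff_conj)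
    have "y \<in> U" using y(2) \<delta>U(2) by (auto simp: dist_commute)
    then have "\<rho> y < 0" using y(1) U(5) by auto
    moreover have "dist (\<rho> y) (\<rho> x0) < \<rho> x0" using dc(2) y(2) by simp
    ultimately show False using pos by (simp add: dist_real_def)
  qed
  define t1 where "t1 = min \<delta> \<delta>U / 2"
  have t1: "t1 > 0" using \<delta> \<delta>U by (simp add: t1_def)
  have b1: "\<beta> \<le> 1" using \<beta> by simp
  have main: "\<forall>t. 0 < t \<and> t < t1 \<longrightarrow> ball (x0 + t *\<^sub>R v) (\<beta> * t) \<subseteq> D"
  proof (intro allI impI)
    fix t assume t: "0 < t \<and> t < t1"
    show "ball (x0 + t *\<^sub>R v) (\<beta> * t) \<subseteq> D"
    proof
      fix y assume y: "y \<in> ball (x0 + t *\<^sub>R v) (\<beta> * t)"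
      define w where "w = y - x0 - t *\<^sub>R v"
      have nw: "norm w < \<beta> * t" using y by (simp add: w_def dist_norm norm_minus_commute algebra_simps)
      have yx: "y - x0 = t *\<^sub>R v + w" by (simp add: w_def)
      have "norm (y - x0) \<le> norm (t *\<^sub>R v) + norm w" unfolding yx by (rule norm_triangle_ineq)
      also have "norm (t *\<^sub>R v) = t" using t nv by simp
      finally have ny: "norm (y - x0) \<le> t + \<beta> * t" using nw by linarith
      have bt: "\<beta> * t \<le> t / 2" using \<beta> t by (simp add: mult_right_mono)
      have tm: "t < min \<delta> \<delta>U / 2" using t by (simp add: t1_def)
      have ny2: "norm (y - x0) < min \<delta> \<delta>U" using ny bt tm t by linarith
      have "L (y - x0) = t * L v + L w" unfolding yx L_def by (simp add: blinfun.add_right blinfun.scaleR_right)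
      also have "L w \<le> K * norm w" using K[of w] by simp
      also have "K * norm w \<le> K * (\<beta> * t)" using nw K0 by (intro mult_left_mono) auto
      finally have Ly0: "L (y - x0) \<le> t * L v + K * (\<beta> * t)" by simp
      have kb: "K * (\<beta> * t) \<le> \<alpha> / 2 * t" using mult_right_mono[OF K\<beta>, of t] t by (simp add: mult.assoc)
      have tLv: "t * L v = - (\<alpha> * t)" by (simp add: \<alpha>_def)
      have e2: "\<alpha> / 2 * t = 1/2 * (\<alpha> * t)" by simp
      have Ly: "L (y - x0) \<le> - (\<alpha> * t) + 1/2 * (\<alpha> * t)" using Ly0 kb tLv e2 by linarith
      have "\<rho> y - \<rho> x0 - L (y - x0) \<le> \<alpha> / 8 * norm (y - x0)"
      proof -
        have "norm (\<rho> y - \<rho> x0 - L (y - x0)) \<le> \<alpha> / 8 * norm (y - x0)" using \<delta>(2)[of y] ny2 by simp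
        then show ?thesis by (metis abs_le_D1 real_norm_def)
      qed
      also have "\<dots> \<le> \<alpha> / 8 * (t + \<beta> * t)" using ny \<alpha> by (intro mult_left_mono) auto
      also have "\<dots> \<le> \<alpha> / 8 * (3/2 * t)" using bt \<alpha> by (intro mult_left_mono) auto
      also have "\<alpha> / 8 * (3/2 * t) = 3/16 * (\<alpha> * t)" by simp
      finally have r1: "\<rho> y - \<rho> x0 - L (y - x0) \<le> 3/16 * (\<alpha> * t)" .
      have at: "\<alpha> * t > 0" using \<alpha> t by simp
      have "\<rho> y < 0" using r1 Ly r0 at by linarith
      moreover have "y \<in> U" using ny2 \<delta>U(2) by (auto simp: dist_norm norm_minus_commute)
      ultimately show "y \<in> D" using U(5) by auto
    qed
  qed
  show ?thesis using t1 \<beta>(1) b1 nv main by blast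
qed

lemma integrand_lower:
  fixes x p p' :: "real^3"
  assumes x1: "x \<notin> cball p \<eta>" and x2: "x \<notin> cball p' \<eta>'" and eta: "\<eta> > 0" "\<eta>' > 0" and tau: "\<tau> > 0"
    and d0: "d0 > 0" "d0 \<le> norm (x - p) - \<eta>" "d0 \<le> norm (x - p') - \<eta>'"
    and c1: "0 < c1" "c1 \<le> 1" "c1 - 1 \<le> ((x - p) \<bullet> (x - p')) / (norm (x - p) * norm (x - p'))"
    and big: "8 / (c1 * d0) \<le> \<tau>"
  shows "(c1/2) * \<tau>\<^sup>2 * (Ub \<tau> p \<eta> x * Ub \<tau> p' \<eta>' x)
      \<le> GU \<tau> p \<eta> x \<bullet> GU \<tau> p' \<eta>' x + \<tau>\<^sup>2 * (Ub \<tau> p \<eta> x * Ub \<tau> p' \<eta>' x)"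
proof -
  define n1 where "n1 = norm (x - p)"
  define n2 where "n2 = norm (x - p')"
  define \<omega>1 where "\<omega>1 = (1 / norm (x - p)) *\<^sub>R (x - p)"
  define \<omega>2 where "\<omega>2 = (1 / norm (x - p')) *\<^sub>R (x - p')"
  define U1 where "U1 = Ub \<tau> p \<eta> x"
  define U2 where "U2 = Ub \<tau> p' \<eta>' x"
  define a1 where "a1 = GU \<tau> p \<eta> x \<bullet> \<omega>1"
  define a2 where "a2 = GU \<tau> p' \<eta>' x \<bullet> \<omega>2"
  have G1: "GU \<tau> p \<eta> x = a1 *\<^sub>R \<omega>1" unfolding a1_def \<omega>1_def by (rule GU_radial[OF x1]) (use eta in simp)
  have G2: "GU \<tau> p' \<eta>' x = a2 *\<^sub>R \<omega>2" unfolding a2_def \<omega>2_def by (rule GU_radial[OF x2]) (use eta in simp)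
  have U1: "U1 \<ge> 0" unfolding U1_def by (rule Ub_nonneg[OF x1])
  have U2: "U2 \<ge> 0" unfolding U2_def by (rule Ub_nonneg[OF x2])
  have a1u: "a1 \<le> 0" unfolding a1_def \<omega>1_def by (rule GU_bounds(1)[OF x1]) (use eta tau in auto)
  have a2u: "a2 \<le> 0" unfolding a2_def \<omega>2_def by (rule GU_bounds(1)[OF x2]) (use eta tau in auto)
  have a1l': "- (\<tau> + 1 / (norm (x - p) - \<eta>)) * U1 \<le> a1"
    unfolding a1_def \<omega>1_def U1_def by (rule GU_bounds(2)[OF x1]) (use eta tau in auto)
  have a2l': "- (\<tau> + 1 / (norm (x - p') - \<eta>')) * U2 \<le> a2"
    unfolding a2_def \<omega>2_def U2_def by (rule GU_bounds(2)[OF x2]) (use eta tau in auto)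
  define M where "M = \<tau> + 1 / d0"
  have id0: "1 / d0 > 0" using d0 by simp
  have M0: "M > 0" unfolding M_def using id0 tau by linarith
  have "1 / (norm (x - p) - \<eta>) \<le> 1 / d0" using d0 by (intro divide_left_mono) auto
  then have "(\<tau> + 1 / (norm (x - p) - \<eta>)) * U1 \<le> M * U1" unfolding M_def using U1 by (intro mult_right_mono) auto
  moreover have "- (\<tau> + 1 / (norm (x - p) - \<eta>)) * U1 = - ((\<tau> + 1 / (norm (x - p) - \<eta>)) * U1)" by (simp add: algebra_simps)
  ultimately have b1: "- a1 \<le> M * U1" using a1l' by linarith
  have "1 / (norm (x - p') - \<eta>') \<le> 1 / d0" using d0 by (intro divide_left_mono) auto
  then have "(\<tau> + 1 / (norm (x - p') - \<eta>')) * U2 \<le> M * U2" unfolding M_def using U2 by (intro mult_right_mono) auto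
  moreover have "- (\<tau> + 1 / (norm (x - p') - \<eta>')) * U2 = - ((\<tau> + 1 / (norm (x - p') - \<eta>')) * U2)" by (simp add: algebra_simps)
  ultimately have b2: "- a2 \<le> M * U2" using a2l' by linarith
  define P where "P = a1 * a2"
  have P0: "P \<ge> 0" unfolding P_def using a1u a2u by (simp add: mult_nonpos_nonpos)
  have PM: "P \<le> (M * U1) * (M * U2)"
  proof -
    have "(- a1) * (- a2) \<le> (M * U1) * (M * U2)"
      using b1 b2 a1u a2u M0 U1 U2 by (intro mult_mono) auto
    then show ?thesis by (simp add: P_def)
  qed
  define c where "c = \<omega>1 \<bullet> \<omega>2"
  have cdef: "c = ((x - p) \<bullet> (x - p')) / (norm (x - p) * norm (x - p'))"
    by (simp add: c_def \<omega>1_def \<omega>2_def)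
  have cb: "c1 - 1 \<le> c" using c1(3) cdef by simp
  have GG: "GU \<tau> p \<eta> x \<bullet> GU \<tau> p' \<eta>' x = P * c"
    unfolding G1 G2 P_def c_def by simp
  have "P * (c1 - 1) \<le> P * c" using cb P0 by (rule mult_left_mono)
  moreover have "((M * U1) * (M * U2)) * (c1 - 1) \<le> P * (c1 - 1)"
    using PM c1 by (intro mult_right_mono_neg) auto
  ultimately have GGl: "(M * M) * (U1 * U2) * (c1 - 1) \<le> GU \<tau> p \<eta> x \<bullet> GU \<tau> p' \<eta>' x"
    unfolding GG by (simp add: algebra_simps)
  define y where "y = 1 / (\<tau> * d0)"
  have y0: "y \<ge> 0" using tau d0 by (simp add: y_def)
  have y8: "y \<le> c1 / 8"
  proof -
    have "8 / c1 \<le> \<tau> * d0" using big c1 d0 by (simp add: field_simps)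
    then show ?thesis using c1 tau d0 by (simp add: y_def field_simps)
  qed
  have My: "M = \<tau> * (1 + y)" using tau d0 by (simp add: M_def y_def field_simps)
  have "(1 - c1) * (1 + y)^2 \<le> 1 - c1 / 2" by (rule poly_ineq[OF c1(1,2) y0 y8])
  then have "\<tau>\<^sup>2 * ((1 - c1) * (1 + y)^2) \<le> \<tau>\<^sup>2 * (1 - c1 / 2)" by (intro mult_left_mono) auto
  then have key: "(1 - c1) * (M * M) \<le> (1 - c1 / 2) * \<tau>\<^sup>2"
    unfolding My by (simp add: power2_eq_square algebra_simps)
  have W: "U1 * U2 \<ge> 0" using U1 U2 by simp
  have "(1 - c1) * (M * M) * (U1 * U2) \<le> (1 - c1 / 2) * \<tau>\<^sup>2 * (U1 * U2)"
    using key W by (rule mult_right_mono)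
  then have "(c1/2) * \<tau>\<^sup>2 * (U1 * U2) \<le> (M * M) * (U1 * U2) * (c1 - 1) + \<tau>\<^sup>2 * (U1 * U2)"
    by (simp add: algebra_simps)
  then show ?thesis using GGl unfolding U1_def U2_def by linarith
qed

theorem lemma3p4:
  fixes D :: "(real^3) set" and p p' :: "real^3" and \<eta> \<eta>' :: real
  assumes "open D" and "bounded D" and "D \<noteq> {}" and "C2_boundary D"
    and "\<eta> > 0" and "\<eta>' > 0"
    and "closure (ball p \<eta>) \<inter> closure D = {}"
    and "closure (ball p' \<eta>') \<inter> closure D = {}"
    and "closed_segment p p' \<inter> closure D = {}"
  shows "\<exists>C \<mu> \<tau>0. C > 0 \<and> \<mu> > 0 \<and> \<tau>0 > 0 \<and>
    (\<forall>\<tau>\<ge>\<tau>0. \<tau> powr (2 + \<mu>) * exp (\<tau> * (INF x\<in>frontier D. phi x p p'))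
       * exp (- \<tau> * (\<eta> + \<eta>')) * Jfun D \<tau> (indicator (ball p \<eta>)) (indicator (ball p' \<eta>')) \<ge> C)"
proof -
  define Dc where "Dc = closure D"
  have cD: "compact Dc" using assms(2) by (simp add: Dc_def)
  have DDc: "D \<subseteq> Dc" by (simp add: Dc_def closure_subset)
  have neD: "Dc \<noteq> {}" using assms(3) DDc by auto
  have out1: "x \<notin> cball p \<eta>" if "x \<in> Dc" for x using assms(7) assms(5) that by (auto simp: Dc_def)
  have out2: "x \<notin> cball p' \<eta>'" if "x \<in> Dc" for x using assms(8) assms(6) that by (auto simp: Dc_def)
  have seg: "x \<notin> closed_segment p p'" if "x \<in> Dc" for x using assms(9) that by (auto simp: Dc_def)
  have np1: "norm (x - p) > \<eta>" if "x \<in> Dc" for x using out1[OF that] by (auto simp: dist_norm norm_minus_commute)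
  have np2: "norm (x - p') > \<eta>'" if "x \<in> Dc" for x using out2[OF that] by (auto simp: dist_norm norm_minus_commute)
  obtain d0 where d0: "d0 > 0" "\<And>x. x \<in> Dc \<Longrightarrow> d0 \<le> norm (x - p) - \<eta>" "\<And>x. x \<in> Dc \<Longrightarrow> d0 \<le> norm (x - p') - \<eta>'"
  proof -
    have "continuous_on Dc (\<lambda>x. min (norm (x - p) - \<eta>) (norm (x - p') - \<eta>'))" by (intro continuous_intros)
    then obtain x1 where x1: "x1 \<in> Dc" "\<forall>y\<in>Dc. min (norm (x1 - p) - \<eta>) (norm (x1 - p') - \<eta>') \<le> min (norm (y - p) - \<eta>) (norm (y - p') - \<eta>')"
      using continuous_attains_inf[OF cD neD] by blast
    have pos: "min (norm (x1 - p) - \<eta>) (norm (x1 - p') - \<eta>') > 0" using np1[OF x1(1)] np2[OF x1(1)] by simp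
    show ?thesis
    proof (rule that[OF pos])
      fix x assume x: "x \<in> Dc"
      then have m: "min (norm (x1 - p) - \<eta>) (norm (x1 - p') - \<eta>') \<le> min (norm (x - p) - \<eta>) (norm (x - p') - \<eta>')"
        using x1(2) by blast
      show "min (norm (x1 - p) - \<eta>) (norm (x1 - p') - \<eta>') \<le> norm (x - p) - \<eta>"
        using m min.cobounded1 order_trans by blast
      show "min (norm (x1 - p) - \<eta>) (norm (x1 - p') - \<eta>') \<le> norm (x - p') - \<eta>'"
        using m min.cobounded2 order_trans by blast
    qed
  qed
  obtain M where M: "\<And>x. x \<in> Dc \<Longrightarrow> norm x \<le> M"
    using compact_imp_bounded[OF cD] by (auto simp: bounded_iff)
  define R where "R = M + norm p + norm p' + \<eta> + \<eta>' + 1"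
  have R1: "norm (x - p) + \<eta> \<le> R" if "x \<in> Dc" for x
  proof -
    have "norm (x - p) \<le> norm x + norm p" by (rule norm_triangle_ineq4)
    then show ?thesis unfolding R_def using M[OF that] assms(6) norm_ge_zero[of p'] by linarith
  qed
  have R2: "norm (x - p') + \<eta>' \<le> R" if "x \<in> Dc" for x
  proof -
    have "norm (x - p') \<le> norm x + norm p'" by (rule norm_triangle_ineq4)
    then show ?thesis unfolding R_def using M[OF that] assms(5) norm_ge_zero[of p] by linarith
  qed
  have R0: "R > 0"
  proof -
    obtain x where "x \<in> Dc" using neD by auto
    then show ?thesis using R1[of x] assms(5) by (smt (verit) norm_ge_zero)
  qed
  define cf where "cf = (\<lambda>x. ((x - p) \<bullet> (x - p')) / (norm (x - p) * norm (x - p')))"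
  have cfc: "continuous_on Dc cf"
  proof -
    have nz: "norm (x - p) * norm (x - p') \<noteq> 0" if "x \<in> Dc" for x
      using np1[OF that] np2[OF that] assms(5,6) by auto
    show ?thesis unfolding cf_def by (intro continuous_intros) (use nz in auto)
  qed
  obtain x2 where x2: "x2 \<in> Dc" "\<forall>y\<in>Dc. cf x2 \<le> cf y"
    using continuous_attains_inf[OF cD neD cfc] by blast
  have cfx2: "cf x2 > -1"
  proof -
    have a: "norm (x2 - p) > 0" using np1[OF x2(1)] assms(5) by linarith
    have b: "norm (x2 - p') > 0" using np2[OF x2(1)] assms(6) by linarith
    have "(x2 - p) \<bullet> (x2 - p') > - (norm (x2 - p) * norm (x2 - p'))"
      by (rule not_segment[OF seg[OF x2(1)]]) (use a b in auto)
    then show ?thesis using a b by (simp add: cf_def field_simps)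
  qed
  define c1 where "c1 = min 1 (cf x2 + 1)"
  have c1: "0 < c1" "c1 \<le> 1" using cfx2 by (auto simp: c1_def)
  have c1x: "c1 - 1 \<le> cf x" if "x \<in> Dc" for x
    using x2(2) that by (auto simp: c1_def)
  have fne: "frontier D \<noteq> {}"
  proof
    assume "frontier D = {}"
    then have "D = {} \<or> D = UNIV" by (simp add: frontier_eq_empty)
    then show False using assms(2,3) by auto
  qed
  have cfr: "compact (frontier D)" using assms(2) by (rule compact_frontier_bounded)
  have phic: "continuous_on (frontier D) (\<lambda>x. phi x p p')" unfolding phi_def by (intro continuous_intros)
  obtain x0 where x0: "x0 \<in> frontier D" "\<forall>y\<in>frontier D. phi x0 p p' \<le> phi y p p'"
    using continuous_attains_inf[OF cfr fne phic] by blast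
  define m where "m = phi x0 p p'"
  have mINF: "(INF x\<in>frontier D. phi x p p') = m" unfolding m_def
    by (rule cInf_eq_minimum) (use x0 in auto)
  have x0Dc: "x0 \<in> Dc" using x0(1) by (simp add: Dc_def frontier_def)
  obtain t1 v \<beta> where tb: "t1 > 0" "0 < \<beta>" "\<beta> \<le> 1" "norm v = 1"
      "\<And>t. 0 < t \<and> t < t1 \<Longrightarrow> ball (x0 + t *\<^sub>R v) (\<beta> * t) \<subseteq> D"
    using boundary_inner_ball[OF assms(4) x0(1)] by blast
  define V1 where "V1 = measure lebesgue (ball (0::real^3) 1)"
  have V1: "V1 > 0" unfolding V1_def using content_ball_pos[of 1 "0::real^3"] by simp
  define A where "A = c1 / 2 * V1^2 * exp (-8) / (16 * pi^2 * R^2)"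
  have A: "A > 0" using c1 V1 R0 by (simp add: A_def)
  define C where "C = A * V1 * \<beta>^3"
  have C: "C > 0" using A V1 tb(2) by (simp add: C_def)
  define \<tau>0 where "\<tau>0 = max (max (1/\<eta>) (1/\<eta>')) (max (2/t1) (8/(c1*d0)))"
  have \<tau>0: "\<tau>0 > 0" using tb(1) unfolding \<tau>0_def by (simp add: less_max_iff_disj)
  have main: "\<forall>\<tau>\<ge>\<tau>0. \<tau> powr (2 + 5) * exp (\<tau> * (INF x\<in>frontier D. phi x p p'))
       * exp (- \<tau> * (\<eta> + \<eta>')) * Jfun D \<tau> (indicator (ball p \<eta>)) (indicator (ball p' \<eta>')) \<ge> C"
  proof (intro allI impI)
    fix \<tau> :: real assume \<tau>: "\<tau> \<ge> \<tau>0"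
    have tau_ge: "1/\<eta> \<le> \<tau>" "1/\<eta>' \<le> \<tau>" "2/t1 \<le> \<tau>" "8/(c1*d0) \<le> \<tau>"
      using \<tau> unfolding \<tau>0_def by auto
    have tpos: "\<tau> > 0" using \<tau> \<tau>0 by linarith
    define t where "t = 1 / \<tau>"
    have t0: "t > 0" using tpos by (simp add: t_def)
    have tt: "\<tau> * t = 1" using tpos by (simp add: t_def)
    have t_eta: "t \<le> \<eta>" using tau_ge(1) assms(5) tpos by (simp add: t_def field_simps)
    have t_eta': "t \<le> \<eta>'" using tau_ge(2) assms(6) tpos by (simp add: t_def field_simps)
    have t_t1: "t < t1"
    proof -
      have "2 / t1 \<le> \<tau>" by (rule tau_ge(3))
      then have "2 \<le> \<tau> * t1" using tb(1) by (simp add: field_simps)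
      then show ?thesis using tpos tb(1) by (simp add: t_def field_simps)
    qed
    define Bt where "Bt = ball (x0 + t *\<^sub>R v) (\<beta> * t)"
    have BtD: "Bt \<subseteq> D" unfolding Bt_def by (rule tb(5)) (use t0 t_t1 in auto)
    define I where "I = (\<lambda>x. (GU \<tau> p \<eta> x \<bullet> GU \<tau> p' \<eta>' x + \<tau>\<^sup>2 * (Ub \<tau> p \<eta> x * Ub \<tau> p' \<eta>' x)) / (16 * pi^2))"
    have Ieq: "grad_dot (vpot \<tau> (indicator (ball p \<eta>))) (vpot \<tau> (indicator (ball p' \<eta>'))) x
        + \<tau>\<^sup>2 * vpot \<tau> (indicator (ball p \<eta>)) x * vpot \<tau> (indicator (ball p' \<eta>')) x = I x" if "x \<in> Dc" for x
      unfolding I_def grad_dot_eq[OF out1[OF that] out2[OF that]] vpot_eq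
      by (simp add: field_simps power2_eq_square)
    have Ilow: "(c1/2) * \<tau>\<^sup>2 * (Ub \<tau> p \<eta> x * Ub \<tau> p' \<eta>' x) / (16 * pi^2) \<le> I x" if "x \<in> Dc" for x
    proof -
      have "(c1/2) * \<tau>\<^sup>2 * (Ub \<tau> p \<eta> x * Ub \<tau> p' \<eta>' x)
          \<le> GU \<tau> p \<eta> x \<bullet> GU \<tau> p' \<eta>' x + \<tau>\<^sup>2 * (Ub \<tau> p \<eta> x * Ub \<tau> p' \<eta>' x)"
        by (rule integrand_lower[OF out1[OF that] out2[OF that] assms(5,6) tpos d0(1) d0(2)[OF that] d0(3)[OF that] c1 _ tau_ge(4)])
           (use c1x[OF that] in \<open>simp add: cf_def\<close>)
      then show ?thesis unfolding I_def by (intro divide_right_mono) auto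
    qed
    have Inn: "I x \<ge> 0" if "x \<in> Dc" for x
    proof -
      have "Ub \<tau> p \<eta> x \<ge> 0" "Ub \<tau> p' \<eta>' x \<ge> 0" using Ub_nonneg out1[OF that] out2[OF that] by auto
      then have "0 \<le> (c1/2) * \<tau>\<^sup>2 * (Ub \<tau> p \<eta> x * Ub \<tau> p' \<eta>' x) / (16 * pi^2)" using c1 by simp
      then show ?thesis using Ilow[OF that] by linarith
    qed
    have Icont: "continuous_on Dc I"
    proof (rule continuous_at_imp_continuous_on, rule ballI)
      fix x assume x: "x \<in> Dc"
      have c1': "continuous (at x) (GU \<tau> p \<eta>)" by (rule GU_cont[OF out1[OF x]])
      have c2': "continuous (at x) (GU \<tau> p' \<eta>')" by (rule GU_cont[OF out2[OF x]])
      have c3: "continuous (at x) (Ub \<tau> p \<eta>)" by (rule has_derivative_continuous[OF Ub_deriv[OF out1[OF x]]])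
      have c4: "continuous (at x) (Ub \<tau> p' \<eta>')" by (rule has_derivative_continuous[OF Ub_deriv[OF out2[OF x]]])
      show "isCont I x" unfolding I_def by (intro continuous_intros c1' c2' c3 c4) simp
    qed
    obtain MI where MI: "\<And>x. x \<in> Dc \<Longrightarrow> norm (I x) \<le> MI"
      using compact_imp_bounded[OF compact_continuous_image[OF Icont cD]] by (auto simp: bounded_iff)
    have intD: "I integrable_on D"
    proof -
      have "I absolutely_integrable_on D"
        by (rule absint_bounded[where M=MI]) (use continuous_on_subset[OF Icont DDc] lmeasurable_open[OF assms(2) assms(1)] MI DDc in auto)
      then show ?thesis using set_lebesgue_integral_eq_integral(1) by blast
    qed
    have intB: "I integrable_on Bt"
    proof -
      have "I absolutely_integrable_on Bt"
      proof (rule absint_bounded[where M=MI])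
        have BDc: "Bt \<subseteq> Dc" using BtD DDc by auto
        show "continuous_on Bt I" by (rule continuous_on_subset[OF Icont BDc])
        show "Bt \<in> lmeasurable" by (simp add: Bt_def)
        show "norm (I x) \<le> MI" if "x \<in> Bt" for x using MI BDc that by blast
      qed
      then show ?thesis using set_lebesgue_integral_eq_integral(1) by blast
    qed
    have J: "Jfun D \<tau> (indicator (ball p \<eta>)) (indicator (ball p' \<eta>')) = integral D I"
      unfolding Jfun_def by (rule integral_cong) (use Ieq DDc in auto)
    have JB: "integral Bt I \<le> integral D I"
      by (rule integral_subset_le[OF BtD intB intD]) (use Inn DDc in auto)
    define E where "E = exp (- \<tau> * (m - \<eta> - \<eta>'))"
    have ptB: "A * t^4 * E \<le> I x" if xB: "x \<in> Bt" for x
    proof -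
      have xD: "x \<in> Dc" using xB BtD DDc by auto
      have dx: "norm (x - x0) \<le> 2 * t"
      proof -
        have "norm (x - x0) \<le> norm (x - (x0 + t *\<^sub>R v)) + norm (t *\<^sub>R v)"
          using norm_triangle_ineq[of "x - (x0 + t *\<^sub>R v)" "t *\<^sub>R v"] by simp
        moreover have "norm (x - (x0 + t *\<^sub>R v)) < \<beta> * t" using xB by (simp add: Bt_def dist_norm norm_minus_commute)
        moreover have "norm (t *\<^sub>R v) = t" using tb(4) t0 by simp
        moreover have "\<beta> * t \<le> t" using tb(3) t0 by simp
        ultimately show ?thesis by linarith
      qed
      have phx: "norm (x - p) + norm (x - p') \<le> m + 4 * t"
      proof -
        have "norm (x - p) \<le> norm (x0 - p) + norm (x - x0)" using norm_triangle_ineq[of "x0 - p" "x - x0"] by simp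
        moreover have "norm (x - p') \<le> norm (x0 - p') + norm (x - x0)" using norm_triangle_ineq[of "x0 - p'" "x - x0"] by simp
        moreover have "m = norm (x0 - p) + norm (x0 - p')" by (simp add: m_def phi_def dist_norm norm_minus_commute)
        ultimately show ?thesis using dx by linarith
      qed
      define n1 where "n1 = norm (x - p)"
      define n2 where "n2 = norm (x - p')"
      define Q1 where "Q1 = exp (- \<tau> * (n1 - \<eta>))"
      define Q2 where "Q2 = exp (- \<tau> * (n2 - \<eta>'))"
      have U1b: "V1 * t^3 * exp (-2) * Q1 / R \<le> Ub \<tau> p \<eta> x"
      proof -
        have lo: "V1 * t^3 * (exp (- \<tau> * (n1 - \<eta> + 2 * t)) / (n1 - \<eta> + 2 * t)) \<le> Ub \<tau> p \<eta> x"
          unfolding n1_def V1_def by (rule Ub_lower[OF out1[OF xD] t0 t_eta]) (use tpos in simp)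
        have ex: "exp (- \<tau> * (n1 - \<eta> + 2 * t)) = Q1 * exp (-2)"
          unfolding Q1_def using tt by (simp add: algebra_simps exp_add[symmetric])
        have N0: "n1 - \<eta> + 2 * t > 0" using np1[OF xD] t0 by (simp add: n1_def)
        have NR: "n1 - \<eta> + 2 * t \<le> R" using R1[OF xD] t_eta by (simp add: n1_def)
        have "Q1 * exp (-2) / R \<le> Q1 * exp (-2) / (n1 - \<eta> + 2 * t)"
          using N0 NR by (intro divide_left_mono) (auto simp: Q1_def)
        then have "V1 * t^3 * (Q1 * exp (-2) / R) \<le> V1 * t^3 * (Q1 * exp (-2) / (n1 - \<eta> + 2 * t))"
          using V1 t0 by (intro mult_left_mono) auto
        then show ?thesis using lo ex by (simp add: field_simps)
      qed
      have U2b: "V1 * t^3 * exp (-2) * Q2 / R \<le> Ub \<tau> p' \<eta>' x"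
      proof -
        have lo: "V1 * t^3 * (exp (- \<tau> * (n2 - \<eta>' + 2 * t)) / (n2 - \<eta>' + 2 * t)) \<le> Ub \<tau> p' \<eta>' x"
          unfolding n2_def V1_def by (rule Ub_lower[OF out2[OF xD] t0 t_eta']) (use tpos in simp)
        have ex: "exp (- \<tau> * (n2 - \<eta>' + 2 * t)) = Q2 * exp (-2)"
          unfolding Q2_def using tt by (simp add: algebra_simps exp_add[symmetric])
        have N0: "n2 - \<eta>' + 2 * t > 0" using np2[OF xD] t0 by (simp add: n2_def)
        have NR: "n2 - \<eta>' + 2 * t \<le> R" using R2[OF xD] t_eta' by (simp add: n2_def)
        have "Q2 * exp (-2) / R \<le> Q2 * exp (-2) / (n2 - \<eta>' + 2 * t)"
          using N0 NR by (intro divide_left_mono) (auto simp: Q2_def)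
        then have "V1 * t^3 * (Q2 * exp (-2) / R) \<le> V1 * t^3 * (Q2 * exp (-2) / (n2 - \<eta>' + 2 * t))"
          using V1 t0 by (intro mult_left_mono) auto
        then show ?thesis using lo ex by (simp add: field_simps)
      qed
      have UU: "(V1 * t^3 * exp (-2) * Q1 / R) * (V1 * t^3 * exp (-2) * Q2 / R) \<le> Ub \<tau> p \<eta> x * Ub \<tau> p' \<eta>' x"
        using U1b U2b V1 t0 R0 Ub_nonneg[OF out1[OF xD]] by (intro mult_mono) (auto simp: Q1_def Q2_def)
      have QQ: "E * exp (-4) \<le> Q1 * Q2"
      proof -
        have "Q1 * Q2 = exp (- \<tau> * (n1 + n2 - \<eta> - \<eta>'))" unfolding Q1_def Q2_def
          by (simp add: exp_add[symmetric] algebra_simps)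
        moreover have "E * exp (-4) = exp (- \<tau> * (m + 4 * t - \<eta> - \<eta>'))" unfolding E_def
          using tt by (simp add: exp_add[symmetric] algebra_simps)
        moreover have "- \<tau> * (m + 4 * t - \<eta> - \<eta>') \<le> - \<tau> * (n1 + n2 - \<eta> - \<eta>')"
          using phx tpos by (simp add: n1_def n2_def)
        ultimately show ?thesis by simp
      qed
      have L: "V1^2 * t^6 * exp (-8) * E / R^2 \<le> Ub \<tau> p \<eta> x * Ub \<tau> p' \<eta>' x"
      proof -
        have "V1^2 * t^6 * exp (-8) * E / R^2 = (V1^2 * t^6 * exp (-4) / R^2) * (E * exp (-4))"
          by (simp add: field_simps exp_add[symmetric] power2_eq_square)
        also have "\<dots> \<le> (V1^2 * t^6 * exp (-4) / R^2) * (Q1 * Q2)"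
          using QQ V1 t0 R0 by (intro mult_left_mono) auto
        also have "\<dots> = (V1 * t^3 * exp (-2) * Q1 / R) * (V1 * t^3 * exp (-2) * Q2 / R)"
          by (simp add: field_simps exp_add[symmetric] power2_eq_square)
        also have "\<dots> \<le> Ub \<tau> p \<eta> x * Ub \<tau> p' \<eta>' x" by (rule UU)
        finally show ?thesis .
      qed
      have "A * t^4 * E = (c1/2) * \<tau>\<^sup>2 * (V1^2 * t^6 * exp (-8) * E / R^2) / (16 * pi^2)"
      proof -
        have "\<tau>\<^sup>2 * t^6 = t^4" using tt by (simp add: power2_eq_square eval_nat_numeral) (metis mult.assoc mult.commute mult.left_commute mult_1)
        then show ?thesis by (simp add: A_def field_simps)
      qed
      also have "\<dots> \<le> (c1/2) * \<tau>\<^sup>2 * (Ub \<tau> p \<eta> x * Ub \<tau> p' \<eta>' x) / (16 * pi^2)"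
        using L c1 by (intro divide_right_mono mult_left_mono) auto
      also have "\<dots> \<le> I x" by (rule Ilow[OF xD])
      finally show ?thesis .
    qed
    have mB: "measure lebesgue Bt = (\<beta> * t)^3 * V1"
      using content_ball_conv_unit_ball[of "\<beta> * t" "x0 + t *\<^sub>R v"] tb(2) t0 by (simp add: Bt_def V1_def)
    have "A * t^4 * E * ((\<beta> * t)^3 * V1) = integral Bt (\<lambda>x. A * t^4 * E)"
    proof -
      have Btm: "Bt \<in> lmeasurable" by (simp add: Bt_def)
      show ?thesis by (simp add: integral_const_lm[OF Btm] mB)
    qed
    also have "\<dots> \<le> integral Bt I"
      by (rule integral_le) (use intB ptB in \<open>auto intro: integrable_on_const simp: Bt_def\<close>)
    also have "\<dots> \<le> Jfun D \<tau> (indicator (ball p \<eta>)) (indicator (ball p' \<eta>'))" using JB J by simp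
    finally have Jl: "C * (t^7 * E) \<le> Jfun D \<tau> (indicator (ball p \<eta>)) (indicator (ball p' \<eta>'))"
      by (simp add: C_def algebra_simps power_mult_distrib eval_nat_numeral)
    define F where "F = \<tau> powr (2 + 5) * exp (\<tau> * m) * exp (- \<tau> * (\<eta> + \<eta>'))"
    have F0: "F \<ge> 0" by (simp add: F_def)
    have FE: "F * (t^7 * E) = 1"
    proof -
      have h1: "\<tau> powr (2 + 5) = \<tau>^7" using tpos by simp
      have h2: "\<tau>^7 * t^7 = 1" using tt by (metis power_mult_distrib power_one)
      have h3: "exp (\<tau> * m) * exp (- \<tau> * (\<eta> + \<eta>')) * E = 1"
        unfolding E_def by (simp add: exp_add[symmetric] algebra_simps)
      have "F * (t^7 * E) = (\<tau> powr (2 + 5) * t^7) * (exp (\<tau> * m) * exp (- \<tau> * (\<eta> + \<eta>')) * E)"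
        unfolding F_def by (simp only: mult_ac)
      also have "\<dots> = 1" unfolding h1 h2 h3 by simp
      finally show ?thesis .
    qed
    have "C = F * (C * (t^7 * E))" using FE by (simp add: algebra_simps)
    also have "\<dots> \<le> F * Jfun D \<tau> (indicator (ball p \<eta>)) (indicator (ball p' \<eta>'))"
      using Jl F0 by (rule mult_left_mono)
    finally show "C \<le> \<tau> powr (2 + 5) * exp (\<tau> * (INF x\<in>frontier D. phi x p p')) * exp (- \<tau> * (\<eta> + \<eta>')) *
        Jfun D \<tau> (indicator (ball p \<eta>)) (indicator (ball p' \<eta>'))"
      unfolding mINF F_def by simp
  qed
  show ?thesis using C \<tau>0 main by (intro exI[of _ C] exI[of _ "5::real"] exI[of _ \<tau>0]) auto
qed

end
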